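(* Let $K$ be a non-Archimedean locally compact field of characteristic $p>0$ with group of 1-units $U=1+M_K$. Let $f:U\to U$ be a locally analytic group endomorphism with $f(1+x)=\sum_{n=0}^{\infty}a_nx^n$ for all $x\in M_K$, where $\sum a_nx^n\in 1+x\mathbb{F}_p[[x]]$. If the sequence $\{a_n\}_{n\ge0}$ is ultimately periodic, then $f(1+x)=(1+x)^N$ for some integer $N$.
   Context: $M_K$ is the maximal ideal of the ring of integers $R_K$ of $K$; with constant field $\mathbb{F}$ of order $q$ and uniformizer $\pi$, $K=\mathbb{F}((\pi))$, $U=1+\pi\mathbb{F}[[\pi]]$, and $|x|=q^{-v(x)}$. A continuous function $f$ on a ball $B_{\alpha,t}=\{u\in R_K:|u-\alpha|\le t\}$, $t=|\rho|$, is analytic there if $f(u)=\sum_{n\ge0}c_n\left(\frac{u-\alpha}{\rho}\right)^n$ with $c_n\in K$, $c_n\to0$; $f:U\to K$ is locally analytic if each $\alpha\in U$ has a ball $B_{\alpha,t_\alpha}\subset U$, $t_\alpha>0$, on which $f$ is analytic. A sequence $\{s_n\}$ is ultimately periodic if there are integers $r>0$, $w\ge0$ with $s_{n+r}=s_n$ for all $n\ge w$. *)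

theory Defs
  imports "HOL-Computational_Algebra.Formal_Laurent_Series"
begin

text \<open>K = F((pi)) is modelled as the type of formal Laurent series over a finite field F
  (type class {field, finite}); the uniformizer is fls_X and v = fls_subdegree (v(0) = infinity).\<close>

definition maxideal :: "('a::{field,finite}) fls set" where
  "maxideal = {x. x = 0 \<or> fls_subdegree x \<ge> 1}"

definition intring :: "('a::{field,finite}) fls set" where
  "intring = {x. x = 0 \<or> fls_subdegree x \<ge> 0}"

definition one_units :: "('a::{field,finite}) fls set" where
  "one_units = {1 + x | x. x \<in> maxideal}"

definition kball :: "('a::{field,finite}) fls \<Rightarrow> 'a fls \<Rightarrow> 'a fls set" where
  "kball \<alpha> \<rho> = {u \<in> intring. u - \<alpha> = 0 \<or> fls_subdegree (u - \<alpha>) \<ge> fls_subdegree \<rho>}"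

definition fls_tendsto :: "(nat \<Rightarrow> ('a::{field,finite}) fls) \<Rightarrow> 'a fls \<Rightarrow> bool" where
  "fls_tendsto s L \<longleftrightarrow>
     (\<forall>M::int. \<exists>N. \<forall>n\<ge>N. L - s n = 0 \<or> fls_subdegree (L - s n) \<ge> M)"

definition analytic_on_kball ::
  "(('a::{field,finite}) fls \<Rightarrow> 'a fls) \<Rightarrow> 'a fls \<Rightarrow> 'a fls \<Rightarrow> bool" where
  "analytic_on_kball f \<alpha> \<rho> \<longleftrightarrow> \<rho> \<noteq> 0 \<and>
     (\<exists>c :: nat \<Rightarrow> 'a fls. fls_tendsto c 0 \<and>
        (\<forall>u \<in> kball \<alpha> \<rho>.
           fls_tendsto (\<lambda>N. \<Sum>n<N. c n * ((u - \<alpha>) / \<rho>) ^ n) (f u)))"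

definition locally_analytic_U :: "(('a::{field,finite}) fls \<Rightarrow> 'a fls) \<Rightarrow> bool" where
  "locally_analytic_U f \<longleftrightarrow>
     (\<forall>\<alpha> \<in> one_units. \<exists>\<rho>. \<rho> \<noteq> 0 \<and> kball \<alpha> \<rho> \<subseteq> one_units \<and> analytic_on_kball f \<alpha> \<rho>)"

definition ultimately_periodic :: "(nat \<Rightarrow> 'b) \<Rightarrow> bool" where
  "ultimately_periodic s \<longleftrightarrow> (\<exists>r w. r > 0 \<and> (\<forall>n\<ge>w. s (n + r) = s n))"

end

theory Submission
  imports Defs
begin
unbundle fps_syntax

lemma maxideal_iff: "x \<in> maxideal \<longleftrightarrow> (\<forall>n\<le>0. x $$ n = 0)"
proof
  assume "x \<in> maxideal"
  then show "\<forall>n\<le>0. x $$ n = 0" unfolding maxideal_def by auto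
next
  assume h: "\<forall>n\<le>0. x $$ n = 0"
  show "x \<in> maxideal"
  proof (cases "x = 0")
    case False
    have "1 \<le> fls_subdegree x" by (rule fls_subdegree_geI[OF False]) (use h in auto)
    then show ?thesis unfolding maxideal_def by auto
  qed (simp add: maxideal_def)
qed

lemma maxideal_add: "x \<in> maxideal \<Longrightarrow> y \<in> maxideal \<Longrightarrow> x + y \<in> maxideal"
  by (simp add: maxideal_iff)

lemma maxideal_mult:
  fixes x y :: "('a::{field,finite}) fls"
  shows "x \<in> maxideal \<Longrightarrow> y \<in> maxideal \<Longrightarrow> x * y \<in> maxideal"
  unfolding maxideal_def by (cases "x = 0"; cases "y = 0") auto

lemma maxideal_regpart:
  fixes x :: "('a::{field,finite}) fls"
  assumes "x \<in> maxideal"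
  shows "fps_to_fls (fls_regpart x) = x" "fls_regpart x $ 0 = 0"
  using assms unfolding maxideal_def by auto

lemma one_plus_ne0:
  fixes x :: "('a::{field,finite}) fls"
  assumes "x \<in> maxideal" shows "1 + x \<noteq> 0"
proof
  assume "1 + x = 0"
  then have "(1 + x) $$ 0 = 0" by simp
  moreover have "x $$ 0 = 0" using assms by (simp add: maxideal_iff)
  ultimately show False by simp
qed

lemma one_minus_pow_ne0:
  fixes x :: "('a::{field,finite}) fls"
  assumes "x \<in> maxideal" "r > 0" shows "1 - x ^ r \<noteq> 0"
proof -
  obtain k where k: "r = Suc k" using assms(2) gr0_implies_Suc by blast
  have "x ^ Suc k \<in> maxideal" for k
    by (induction k) (use assms(1) in \<open>auto intro: maxideal_mult\<close>)
  then have "x ^ r \<in> maxideal" using k by simp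
  then have "(x ^ r) $$ 0 = 0" by (simp add: maxideal_iff)
  then have "(1 - x ^ r) $$ 0 = 1" by simp
  then show ?thesis by auto
qed

lemma fps_to_fls_sum_lt: "fps_to_fls (\<Sum>i<(M::nat). g i) = (\<Sum>i<M. fps_to_fls (g i))"
  by (induction M) simp_all

lemma comp_finite:
  fixes T b :: "('a::{field,finite}) fps"
  assumes T: "\<forall>n\<ge>M. T $ n = 0" and b0: "b $ 0 = 0"
  shows "fps_to_fls (T oo b) = poly (\<Sum>i<M. monom (fls_const (T $ i)) i) (fps_to_fls b)"
proof -
  have Teq: "T = (\<Sum>i<M. fps_const (T $ i) * fps_X ^ i)"
  proof (rule fps_ext)
    fix n
    have "(\<Sum>i<M. fps_const (T $ i) * fps_X ^ i) $ n = (\<Sum>i<M. if i = n then T $ n else 0)"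
      unfolding fps_sum_nth by (rule sum.cong) auto
    also have "\<dots> = T $ n" using T by (auto simp: sum.delta')
    finally show "T $ n = (\<Sum>i<M. fps_const (T $ i) * fps_X ^ i) $ n" by simp
  qed
  have "T oo b = (\<Sum>i<M. fps_const (T $ i) * b ^ i)"
    by (subst Teq) (simp add: fps_compose_sum_distrib fps_compose_mult_distrib[OF b0]
        fps_compose_power[OF b0, symmetric] b0)
  then show ?thesis
    by (simp add: poly_sum poly_monom fps_to_fls_sum_lt fps_to_fls_power fls_times_fps_to_fls)
qed

lemma one_units_iff: "u \<in> one_units \<longleftrightarrow> u - 1 \<in> maxideal"
  unfolding one_units_def by (auto intro!: exI[of _ "u - 1"])

lemma one_units_mult:
  fixes u v :: "('a::{field,finite}) fls"
  assumes "u \<in> one_units" "v \<in> one_units" shows "u * v \<in> one_units"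
proof -
  have x: "u - 1 \<in> maxideal" and y: "v - 1 \<in> maxideal" using assms by (simp_all add: one_units_iff)
  have "u * v - 1 = (u - 1) + (v - 1) + (u - 1) * (v - 1)" by (simp add: algebra_simps)
  moreover have "(u - 1) + (v - 1) + (u - 1) * (v - 1) \<in> maxideal"
    using x y by (intro maxideal_add maxideal_mult)
  ultimately show ?thesis unfolding one_units_iff by metis
qed

lemma one_units_infinite: "infinite (one_units :: ('a::{field,finite}) fls set)"
proof -
  let ?g = "\<lambda>n::nat. 1 + fls_X ^ Suc n :: 'a fls"
  have "inj ?g"
  proof (rule injI)
    fix m n assume "?g m = ?g n"
    then have "(fls_X ^ Suc m :: 'a fls) $$ int (Suc m) = fls_X ^ Suc n $$ int (Suc m)" by simp
    then show "m = n" by (simp only: fls_X_power_nth) (simp split: if_splits)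
  qed
  moreover have "range ?g \<subseteq> one_units"
    by (auto simp: one_units_iff maxideal_iff)
  ultimately show ?thesis using range_inj_infinite infinite_super by blast
qed

lemma poly_zero_on_infinite:
  fixes p :: "'b::idom poly"
  assumes "infinite S" "\<forall>u\<in>S. poly p u = 0" shows "p = 0"
proof (rule ccontr)
  assume "p \<noteq> 0"
  then have "finite {x. poly p x = 0}" by (rule poly_roots_finite)
  moreover have "S \<subseteq> {x. poly p x = 0}" using assms(2) by auto
  ultimately show False using assms(1) finite_subset by blast
qed

theorem lemma2p4:
  fixes f :: "('a::{field,finite}) fls \<Rightarrow> 'a fls"
    and A :: "'a fps"
  assumes maps: "\<forall>u \<in> one_units. f u \<in> one_units"
    and hom: "\<forall>u \<in> one_units. \<forall>v \<in> one_units. f (u * v) = f u * f v"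
    and loc: "locally_analytic_U f"
    and coeffs_Fp: "\<forall>n. \<exists>k::nat. fps_nth A n = of_nat k"
    and const: "fps_nth A 0 = 1"
    and series: "\<forall>x \<in> maxideal. f (1 + x) = fps_to_fls (A oo fls_regpart x)"
    and per: "ultimately_periodic (fps_nth A)"
  shows "\<exists>N::int. \<forall>x \<in> maxideal. f (1 + x) = (1 + x) powi N"
proof -
  obtain r w where r0: "r > 0" and perw: "\<forall>n\<ge>w. A $ (n + r) = A $ n"
    using per unfolding ultimately_periodic_def by blast
  define T where "T = A * (1 - fps_X ^ r)"
  have Tz: "\<forall>n\<ge>w + r. T $ n = 0"
  proof (intro allI impI)
    fix n assume n: "w + r \<le> n"
    have "T = A - fps_X ^ r * A" unfolding T_def by (simp add: algebra_simps)
    then have "T $ n = A $ n - A $ (n - r)" using n by (simp add: fps_X_power_mult_nth)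
    moreover have "A $ (n - r + r) = A $ (n - r)" proof -
      have "w \<le> n - r" using n by simp
      then show ?thesis using perw by blast
    qed
    ultimately show "T $ n = 0" using n by simp
  qed
  define PF :: "'a fls poly" where "PF = (\<Sum>i<w + r. monom (fls_const (T $ i)) i)"
  define QF :: "'a fls poly" where "QF = 1 - monom 1 r"
  have key: "f (1 + x) * poly QF x = poly PF x" if x: "x \<in> maxideal" for x
  proof -
    define b where "b = fls_regpart x"
    have b0: "b $ 0 = 0" and xb: "fps_to_fls b = x" using maxideal_regpart[OF x] b_def by auto
    have "T oo b = (A oo b) * (1 - b ^ r)"
      unfolding T_def by (simp add: fps_compose_mult_distrib[OF b0] fps_compose_sub_distrib
          fps_compose_power[OF b0, symmetric] b0)
    then have "fps_to_fls (T oo b) = f (1 + x) * (1 - x ^ r)"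
      using series x xb b_def by (simp add: fls_times_fps_to_fls fps_to_fls_power)
    moreover have "fps_to_fls (T oo b) = poly PF x"
      unfolding PF_def using comp_finite[OF Tz b0] xb by simp
    ultimately show ?thesis unfolding QF_def by (simp add: poly_monom)
  qed
  have QFne: "poly QF x \<noteq> 0" if "x \<in> maxideal" for x
    using one_minus_pow_ne0[OF that r0] unfolding QF_def by (simp add: poly_monom)
  define P' where "P' = pcompose PF [:-1, 1:]"
  define Q' where "Q' = pcompose QF [:-1, 1:]"
  have U: "f u * poly Q' u = poly P' u \<and> poly Q' u \<noteq> 0 \<and> f u \<noteq> 0 \<and> u \<noteq> 0"
    if u: "u \<in> one_units" for u
  proof -
    have x: "u - 1 \<in> maxideal" using u by (simp add: one_units_iff)
    have fu: "f u \<in> one_units" using maps u by blast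
    have "1 + (u - 1) = u" by simp
    then show ?thesis using key[OF x] QFne[OF x] one_plus_ne0[OF x]
        one_plus_ne0[of "f u - 1"] fu
      unfolding P'_def Q'_def by (auto simp: poly_pcompose one_units_iff)
  qed
  have one_U: "(1::'a fls) \<in> one_units" by (simp add: one_units_iff maxideal_def)
  have P'ne: "P' \<noteq> 0" using U[OF one_U] by auto
  have Q'ne: "Q' \<noteq> 0" using U[OF one_U] by auto
  have fdiv: "f u = poly P' u / poly Q' u" if "u \<in> one_units" for u
    using U[OF that] by (simp add: field_simps)
  have cross: "poly P' (u * v) * poly Q' u * poly Q' v = poly P' u * poly P' v * poly Q' (u * v)"
    if u: "u \<in> one_units" and v: "v \<in> one_units" for u v
  proof -
    have uv: "u * v \<in> one_units" using one_units_mult[OF u v] .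
    have "poly P' (u * v) / poly Q' (u * v) = poly P' u / poly Q' u * (poly P' v / poly Q' v)"
      using hom u v uv fdiv by metis
    then show ?thesis using U[OF u] U[OF v] U[OF uv] by (simp add: field_simps)
  qed
  obtain P1 where P1: "P' = [:- 0, 1:] ^ order 0 P' * P1" "\<not> [:- 0, 1:] dvd P1"
    using order_decomp[OF P'ne] by blast
  obtain Q1 where Q1: "Q' = [:- 0, 1:] ^ order 0 Q' * Q1" "\<not> [:- 0, 1:] dvd Q1"
    using order_decomp[OF Q'ne] by blast
  define a where "a = order 0 P'"
  define b where "b = order 0 Q'"
  have P1e: "poly P' u = u ^ a * poly P1 u" for u
    unfolding a_def by (subst P1(1)) simp
  have Q1e: "poly Q' u = u ^ b * poly Q1 u" for u
    unfolding b_def by (subst Q1(1)) simp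
  have P10: "poly P1 0 \<noteq> 0" using P1(2) by (simp add: poly_eq_0_iff_dvd)
  have Q10: "poly Q1 0 \<noteq> 0" using Q1(2) by (simp add: poly_eq_0_iff_dvd)
  have cancel: "poly P1 (u * v) * poly Q1 u * poly Q1 v = poly P1 u * poly P1 v * poly Q1 (u * v)"
    if u: "u \<in> one_units" and v: "v \<in> one_units" for u v
  proof -
    have nz: "u ^ a * v ^ a * u ^ b * v ^ b \<noteq> 0" using U[OF u] U[OF v] by simp
    have "(u ^ a * v ^ a * u ^ b * v ^ b) * (poly P1 (u * v) * poly Q1 u * poly Q1 v)
        = (u ^ a * v ^ a * u ^ b * v ^ b) * (poly P1 u * poly P1 v * poly Q1 (u * v))"
      using cross[OF u v] by (simp add: P1e Q1e power_mult_distrib algebra_simps)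
    then show ?thesis using nz U[OF u] U[OF v] by simp
  qed
  have eqv: "poly P1 v = poly Q1 v" if v: "v \<in> one_units" for v
  proof -
    define G where "G = pcompose P1 [:0, v:] * Q1 * [:poly Q1 v:] - P1 * [:poly P1 v:] * pcompose Q1 [:0, v:]"
    have "\<forall>u\<in>(one_units :: 'a fls set). poly G u = 0"
    proof
      fix u :: "'a fls" assume u: "u \<in> one_units"
      show "poly G u = 0" using cancel[OF u v]
        unfolding G_def by (simp add: poly_pcompose mult.commute mult.left_commute)
    qed
    then have "G = 0" using poly_zero_on_infinite one_units_infinite by blast
    then have "poly G 0 = 0" by simp
    then have "poly P1 0 * poly Q1 0 * (poly Q1 v - poly P1 v) = 0"
      unfolding G_def by (simp add: poly_pcompose algebra_simps)
    then show ?thesis using P10 Q10 by simp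
  qed
  show ?thesis
  proof (intro exI ballI)
    fix x :: "'a fls" assume x: "x \<in> maxideal"
    define u where "u = 1 + x"
    have u: "u \<in> one_units" using x unfolding u_def by (simp add: one_units_iff)
    have Q1u: "poly Q1 u \<noteq> 0" using U[OF u] Q1e by auto
    have "f u = u ^ a * poly P1 u / (u ^ b * poly Q1 u)" using fdiv[OF u] P1e Q1e by simp
    also have "\<dots> = u ^ a / u ^ b" using Q1u eqv[OF u] by simp
    also have "\<dots> = u powi (int a - int b)" using U[OF u] by (simp add: power_int_diff)
    finally show "f (1 + x) = (1 + x) powi (int a - int b)" unfolding u_def .
  qed
qed

end
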